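(* Let $(F,\phi)$ be an extended representation graph for $E$ and $w\in F^0$ with $\phi(w)=v$. Then: (i) if $w$ is a source or receives an edge lying over a nonspecial real edge, $\phi$ induces a bijection $F^{\ge0}_w\to X_v$; (ii) if $w$ receives an edge lying over a special real edge $e$, $\phi$ induces a bijection from $F^{\ge0}_w$ onto the set of $x\in X_v$ that either have length $0$ or whose first edge is not $e^*$; (iii) if $w$ receives an edge lying over a ghost edge, $\phi$ induces a bijection from $F^{\ge0}_w$ onto the set of $x\in X_v$ that either have length $0$ or whose first edge is a ghost edge. In particular, $\phi$ maps every path in $F$ to a basis path.
   Context: $E=(E^0,E^1,s,r)$ is a row-finite directed graph; a vertex is regular if it emits an edge; for each regular $v$ a fixed edge $e^v\in s^{-1}(v)$ is called special, all other edges nonspecial. Paths of length $n\ge1$ are words $y_1\dots y_n$ of edges with $r(y_i)=s(y_{i+1})$; paths of length $0$ are vertices. For a graph $F$ and $w\in F^0$, $F^{\ge0}_w$ is the set of all paths in $F$ (of any length $\ge0$) with source $w$; a graph homomorphism maps paths to paths letterwise. The double graph $E_d$ has vertices $E^0$ and edges $e$ (real) and $e^*$ (ghost) for $e\in E^1$, with $s_d(e)=s(e),r_d(e)=r(e),s_d(e^* )=r(e),r_d(e^* )=s(e)$. For $p=e_1\dots e_n$ set $p^*=e_n^*\dots e_1^*$. The set $X$ of basis paths consists of the paths in $E_d$: vertices; $p,p^*$ for paths $p$ of length $\ge1$ in $E$; $pq^*$ with $p=e_1\dots e_k,q=f_1\dots f_n$ of length $\ge1$ in $E$, $r(p)=r(q)$,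 and $e_k\ne f_n$ or $e_k=f_n$ nonspecial. $X_v=\{x\in X: s_d(x)=v\}$. An extended representation graph for $E$ is a pair $(F,\phi)$, $F$ a directed graph, $\phi:F\to E_d$ a graph homomorphism, such that for every $w\in F^0$: (i) $w$ is a source or receives exactly one edge $f_w$; (ii) if $w$ is a source or $\phi(f_w)$ is a nonspecial real edge, $\phi$ maps $s^{-1}(w)$ bijectively onto $s_d^{-1}(\phi(w))$; (iii) if $\phi(f_w)$ is a special real edge, $\phi$ maps $s^{-1}(w)$ bijectively onto $s_d^{-1}(\phi(w))\setminus\{\phi(f_w)^*\}$; (iv) if $\phi(f_w)$ is a ghost edge, $\phi$ maps $s^{-1}(w)$ bijectively onto the ghost edges in $s_d^{-1}(\phi(w))$. A vertex or edge of $F$ lies over its image under $\phi$. *)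

theory Defs
  imports "Graph_Theory.Digraph" "Graph_Theory.Arc_Walk"
begin

datatype 'e dedge = Re 'e | Gh 'e

fun is_ghost :: "'e dedge \<Rightarrow> bool" where
  "is_ghost (Re e) = False" | "is_ghost (Gh e) = True"

definition row_finite :: "('v,'e) pre_digraph \<Rightarrow> bool" where
  "row_finite E \<equiv> (\<forall>v \<in> verts E. finite (out_arcs E v))"

definition regular :: "('v,'e) pre_digraph \<Rightarrow> 'v \<Rightarrow> bool" where
  "regular E v \<equiv> out_arcs E v \<noteq> {}"

definition special_choice :: "('v,'e) pre_digraph \<Rightarrow> ('v \<Rightarrow> 'e) \<Rightarrow> bool" where
  "special_choice E sp \<equiv> (\<forall>v \<in> verts E. regular E v \<longrightarrow> sp v \<in> out_arcs E v)"

definition special :: "('v,'e) pre_digraph \<Rightarrow> ('v \<Rightarrow> 'e) \<Rightarrow> 'e \<Rightarrow> bool" where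
  "special E sp e \<equiv> e = sp (tail E e)"

definition double :: "('v,'e) pre_digraph \<Rightarrow> ('v, 'e dedge) pre_digraph" where
  "double E = \<lparr> verts = verts E,
     arcs = Re ` arcs E \<union> Gh ` arcs E,
     tail = (\<lambda>x. case x of Re e \<Rightarrow> tail E e | Gh e \<Rightarrow> head E e),
     head = (\<lambda>x. case x of Re e \<Rightarrow> head E e | Gh e \<Rightarrow> tail E e) \<rparr>"

text \<open>Paths of any length \<open>\<ge> 0\<close> are represented as pairs (source vertex, list of edges);
  a path of length 0 is (v, []).  The set of paths of G with source w:\<close>
definition paths_from :: "('a,'b) pre_digraph \<Rightarrow> 'a \<Rightarrow> ('a \<times> 'b list) set" where
  "paths_from G w = {(w, p) | p v. pre_digraph.awalk G w p v}"

definition path_map :: "('a \<Rightarrow> 'v) \<Rightarrow> ('b \<Rightarrow> 'c) \<Rightarrow> ('a \<times> 'b list) \<Rightarrow> ('v \<times> 'c list)" where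
  "path_map phiV phiE x = (phiV (fst x), map phiE (snd x))"

definition basis_paths :: "('v,'e) pre_digraph \<Rightarrow> ('v \<Rightarrow> 'e) \<Rightarrow> ('v \<times> 'e dedge list) set" where
  "basis_paths E sp =
     {(v, []) | v. v \<in> verts E}
   \<union> {(u, map Re p) | u p v. pre_digraph.awalk E u p v \<and> p \<noteq> []}
   \<union> {(v, map Gh (rev p)) | u p v. pre_digraph.awalk E u p v \<and> p \<noteq> []}
   \<union> {(u, map Re p @ map Gh (rev q)) | u p q v u'.
        pre_digraph.awalk E u p v \<and> pre_digraph.awalk E u' q v \<and> p \<noteq> [] \<and> q \<noteq> [] \<and>
        (last p \<noteq> last q \<or> \<not> special E sp (last p))}"

definition basis_paths_from :: "('v,'e) pre_digraph \<Rightarrow> ('v \<Rightarrow> 'e) \<Rightarrow> 'v \<Rightarrow> ('v \<times> 'e dedge list) set" where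
  "basis_paths_from E sp v = {x \<in> basis_paths E sp. fst x = v}"

definition graph_hom :: "('a,'b) pre_digraph \<Rightarrow> ('v,'c) pre_digraph \<Rightarrow> ('a \<Rightarrow> 'v) \<Rightarrow> ('b \<Rightarrow> 'c) \<Rightarrow> bool" where
  "graph_hom F G phiV phiE \<equiv>
     (\<forall>w \<in> verts F. phiV w \<in> verts G) \<and>
     (\<forall>f \<in> arcs F. phiE f \<in> arcs G \<and> tail G (phiE f) = phiV (tail F f) \<and> head G (phiE f) = phiV (head F f))"

definition ext_rep_graph :: "('v,'e) pre_digraph \<Rightarrow> ('v \<Rightarrow> 'e) \<Rightarrow> ('a,'b) pre_digraph
     \<Rightarrow> ('a \<Rightarrow> 'v) \<Rightarrow> ('b \<Rightarrow> 'e dedge) \<Rightarrow> bool" where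
  "ext_rep_graph E sp F phiV phiE \<equiv>
     wf_digraph F \<and> graph_hom F (double E) phiV phiE \<and>
     (\<forall>w \<in> verts F.
        (in_arcs F w = {} \<or> (\<exists>f. in_arcs F w = {f})) \<and>
        (in_arcs F w = {} \<longrightarrow> bij_betw phiE (out_arcs F w) (out_arcs (double E) (phiV w))) \<and>
        (\<forall>f \<in> in_arcs F w.
           (\<forall>e. phiE f = Re e \<and> \<not> special E sp e \<longrightarrow>
                 bij_betw phiE (out_arcs F w) (out_arcs (double E) (phiV w))) \<and>
           (\<forall>e. phiE f = Re e \<and> special E sp e \<longrightarrow>
                 bij_betw phiE (out_arcs F w) (out_arcs (double E) (phiV w) - {Gh e})) \<and>
           (\<forall>e. phiE f = Gh e \<longrightarrow>
                 bij_betw phiE (out_arcs F w) {g \<in> out_arcs (double E) (phiV w). is_ghost g})))"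

end

theory Submission
  imports Defs
begin

fun allowed :: "('v,'e) pre_digraph \<Rightarrow> ('v \<Rightarrow> 'e) \<Rightarrow> 'e dedge option \<Rightarrow> 'e dedge \<Rightarrow> bool" where
  "allowed E sp None x = True"
| "allowed E sp (Some (Re e)) x = (special E sp e \<longrightarrow> x \<noteq> Gh e)"
| "allowed E sp (Some (Gh e)) x = is_ghost x"

fun okp :: "('v,'e) pre_digraph \<Rightarrow> ('v \<Rightarrow> 'e) \<Rightarrow> 'e dedge option \<Rightarrow> 'e dedge list \<Rightarrow> bool" where
  "okp E sp pr [] = True"
| "okp E sp pr (x # xs) = (allowed E sp pr x \<and> okp E sp (Some x) xs)"

lemma okp_pr: "okp E sp pr xs \<longleftrightarrow> okp E sp None xs \<and> (xs = [] \<or> allowed E sp pr (hd xs))"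
  by (cases xs) auto

lemma okp_append: "okp E sp pr (xs @ ys) \<longleftrightarrow> okp E sp pr xs \<and> okp E sp (if xs = [] then pr else Some (last xs)) ys"
  by (induction xs arbitrary: pr) auto

lemma okp_Re: "okp E sp pr (map Re p) \<longleftrightarrow> (p = [] \<or> allowed E sp pr (Re (hd p)))"
proof (induction p arbitrary: pr)
  case (Cons a p) then show ?case using Cons.IH[of "Some (Re a)"] by (cases p) auto
qed auto

lemma okp_Gh: "okp E sp pr (map Gh p) \<longleftrightarrow> (p = [] \<or> allowed E sp pr (Gh (hd p)))"
proof (induction p arbitrary: pr)
  case (Cons a p) then show ?case using Cons.IH[of "Some (Gh a)"] by (cases p) auto
qed auto

lemma okp_split: "okp E sp pr xs \<Longrightarrow> \<exists>p r. xs = map Re p @ map Gh r"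
proof (induction xs arbitrary: pr)
  case Nil then show ?case by auto
next
  case (Cons x xs)
  then obtain p r where pr: "xs = map Re p @ map Gh r" by (meson okp.simps(2))
  show ?case
  proof (cases x)
    case (Re e) then show ?thesis using pr by (intro exI[of _ "e # p"] exI[of _ r]) auto
  next
    case (Gh e)
    have "p = []"
    proof (rule ccontr)
      assume "p \<noteq> []"
      then obtain a p' where "p = a # p'" by (cases p) auto
      then show False using Cons.prems Gh pr by auto
    qed
    then show ?thesis using pr Gh by (intro exI[of _ "[]"] exI[of _ "e # r"]) auto
  qed
qed

lemma awalk_Nil_iff': "pre_digraph.awalk G u [] v \<longleftrightarrow> u = v \<and> u \<in> verts G"
  by (auto simp add: pre_digraph.awalk_def pre_digraph.cas.simps)

lemma awalk_append':
  assumes "wf_digraph G"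
  shows "pre_digraph.awalk G u (p @ q) w \<longleftrightarrow> (\<exists>m. pre_digraph.awalk G u p m \<and> pre_digraph.awalk G m q w)"
proof (induction p arbitrary: u)
  case Nil then show ?case using wf_digraph.awalk_hd_in_verts[OF assms] by (auto simp: awalk_Nil_iff')
next
  case (Cons a p) then show ?case by (auto simp: wf_digraph.awalk_Cons_iff[OF assms])
qed

lemma wf_double: "wf_digraph E \<Longrightarrow> wf_digraph (double E)"
  unfolding wf_digraph_def double_def by (auto split: dedge.splits)

lemma double_simps[simp]:
  "verts (double E) = verts E"
  "Re e \<in> arcs (double E) \<longleftrightarrow> e \<in> arcs E"
  "Gh e \<in> arcs (double E) \<longleftrightarrow> e \<in> arcs E"
  "tail (double E) (Re e) = tail E e"
  "head (double E) (Re e) = head E e"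
  "tail (double E) (Gh e) = head E e"
  "head (double E) (Gh e) = tail E e"
  by (auto simp: double_def)

lemma awalk_Re:
  assumes "wf_digraph E"
  shows "pre_digraph.awalk (double E) u (map Re p) v \<longleftrightarrow> pre_digraph.awalk E u p v"
proof (induction p arbitrary: u)
  case Nil then show ?case by (simp add: awalk_Nil_iff')
next
  case (Cons a p) then show ?case
    by (simp add: wf_digraph.awalk_Cons_iff[OF assms] wf_digraph.awalk_Cons_iff[OF wf_double[OF assms]])
qed

lemma awalk_Gh:
  assumes "wf_digraph E"
  shows "pre_digraph.awalk (double E) u (map Gh p) v \<longleftrightarrow> pre_digraph.awalk E v (rev p) u"
proof (induction p arbitrary: u)
  case Nil then show ?case by (auto simp add: awalk_Nil_iff')
next
  case (Cons a p)
  have "pre_digraph.awalk E v (rev (a # p)) u \<longleftrightarrow> pre_digraph.awalk E v (rev p) (tail E a) \<and> a \<in> arcs E \<and> head E a = u"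
    using wf_digraph.head_in_verts[OF assms]
    by (auto simp: awalk_append'[OF assms] wf_digraph.awalk_Cons_iff[OF assms] awalk_Nil_iff')
  then show ?case using Cons
    by (auto simp: wf_digraph.awalk_Cons_iff[OF wf_double[OF assms]])
qed

lemma bp_vert: "v \<in> verts E \<Longrightarrow> (v, []) \<in> basis_paths E sp"
  unfolding basis_paths_def by (rule UnI1, rule UnI1, rule UnI1) blast
lemma bp_re: "pre_digraph.awalk E u p v \<Longrightarrow> p \<noteq> [] \<Longrightarrow> (u, map Re p) \<in> basis_paths E sp"
  unfolding basis_paths_def by (rule UnI1, rule UnI1, rule UnI2) blast
lemma bp_gh: "pre_digraph.awalk E u p v \<Longrightarrow> p \<noteq> [] \<Longrightarrow> (v, map Gh (rev p)) \<in> basis_paths E sp"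
  unfolding basis_paths_def by (rule UnI1, rule UnI2) blast
lemma bp_mix: "pre_digraph.awalk E u p v \<Longrightarrow> pre_digraph.awalk E u' q v \<Longrightarrow> p \<noteq> [] \<Longrightarrow> q \<noteq> [] \<Longrightarrow>
        (last p \<noteq> last q \<or> \<not> special E sp (last p)) \<Longrightarrow> (u, map Re p @ map Gh (rev q)) \<in> basis_paths E sp"
  unfolding basis_paths_def by (rule UnI2) blast
lemma bp_cases:
  assumes "x \<in> basis_paths E sp"
  obtains (a) v where "x = (v, [])" "v \<in> verts E"
    | (b) u p v where "x = (u, map Re p)" "pre_digraph.awalk E u p v" "p \<noteq> []"
    | (c) u p v where "x = (v, map Gh (rev p))" "pre_digraph.awalk E u p v" "p \<noteq> []"
    | (d) u p q v u' where "x = (u, map Re p @ map Gh (rev q))" "pre_digraph.awalk E u p v"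
        "pre_digraph.awalk E u' q v" "p \<noteq> []" "q \<noteq> []" "last p \<noteq> last q \<or> \<not> special E sp (last p)"
  using assms unfolding basis_paths_def
  apply (elim UnE CollectE exE conjE)
  apply (rule a; assumption)
  apply (rule b; assumption)
  apply (rule c; assumption)
  apply (rule d; assumption)
  done

lemma basis_char:
  assumes wfE: "wf_digraph E"
  shows "basis_paths E sp = {(u, xs) | u xs. (\<exists>v. pre_digraph.awalk (double E) u xs v) \<and> okp E sp None xs}"
proof (intro set_eqI iffI)
  fix x assume "x \<in> basis_paths E sp"
  then show "x \<in> {(u, xs) | u xs. (\<exists>v. pre_digraph.awalk (double E) u xs v) \<and> okp E sp None xs}"
  proof (cases rule: bp_cases)
    case (a v) then show ?thesis by (auto simp: awalk_Nil_iff')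
  next
    case (b u p v) then show ?thesis by (auto simp: awalk_Re[OF wfE] okp_Re)
  next
    case (c u p v) then show ?thesis by (auto simp: awalk_Gh[OF wfE] okp_Gh)
  next
    case (d u p q v u')
    have w: "pre_digraph.awalk (double E) u (map Re p @ map Gh (rev q)) u'"
      using d by (auto simp: awalk_append'[OF wf_double[OF wfE]] awalk_Re[OF wfE] awalk_Gh[OF wfE])
    have "okp E sp None (map Re p @ map Gh (rev q))"
      using d by (auto simp: okp_append okp_Re okp_Gh last_map hd_rev)
    then show ?thesis using w d by auto
  qed
next
  fix x assume "x \<in> {(u, xs) | u xs. (\<exists>v. pre_digraph.awalk (double E) u xs v) \<and> okp E sp None xs}"
  then obtain u xs v where x: "x = (u, xs)" and w: "pre_digraph.awalk (double E) u xs v"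
    and ok: "okp E sp None xs" by blast
  obtain p r where xs: "xs = map Re p @ map Gh r" using okp_split[OF ok] by blast
  obtain m where m1: "pre_digraph.awalk E u p m" and m2: "pre_digraph.awalk E v (rev r) m"
    using w xs by (auto simp: awalk_append'[OF wf_double[OF wfE]] awalk_Re[OF wfE] awalk_Gh[OF wfE])
  show "x \<in> basis_paths E sp"
  proof (cases "p = []")
    case True note p = this
    show ?thesis
    proof (cases "r = []")
      case True then show ?thesis using p x xs m1 by (auto simp: awalk_Nil_iff' intro: bp_vert)
    next
      case False
      then have "x = (m, map Gh (rev (rev r)))" using p x xs m1 by (auto simp: awalk_Nil_iff')
      then show ?thesis using bp_gh[OF m2, of sp] False by simp
    qed
  next
    case False note p = this
    show ?thesis
    proof (cases "r = []")
      case True then show ?thesis using p x xs m1 bp_re by simp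
    next
      case False
      have "allowed E sp (Some (Re (last p))) (Gh (hd r))"
        using ok xs p False by (auto simp: okp_append okp_Gh last_map)
      then have c: "last p \<noteq> last (rev r) \<or> \<not> special E sp (last p)"
        using False by (auto simp: last_rev)
      have "x = (u, map Re p @ map Gh (rev (rev r)))" using x xs by simp
      then show ?thesis using bp_mix[OF m1 m2 p _ c] False x xs by simp
    qed
  qed
qed

lemma ext_wf: "ext_rep_graph E sp F phiV phiE \<Longrightarrow> wf_digraph F"
  unfolding ext_rep_graph_def by (rule conjunct1)

lemma ext_hom: "ext_rep_graph E sp F phiV phiE \<Longrightarrow> graph_hom F (double E) phiV phiE"
  unfolding ext_rep_graph_def by (rule conjunct1[OF conjunct2])

lemma ext_D:
  assumes "ext_rep_graph E sp F phiV phiE" "w \<in> verts F"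
  shows "in_arcs F w = {} \<or> (\<exists>f. in_arcs F w = {f})"
   "in_arcs F w = {} \<longrightarrow> bij_betw phiE (out_arcs F w) (out_arcs (double E) (phiV w))"
   "\<forall>f \<in> in_arcs F w.
           (\<forall>e. phiE f = Re e \<and> \<not> special E sp e \<longrightarrow>
                 bij_betw phiE (out_arcs F w) (out_arcs (double E) (phiV w))) \<and>
           (\<forall>e. phiE f = Re e \<and> special E sp e \<longrightarrow>
                 bij_betw phiE (out_arcs F w) (out_arcs (double E) (phiV w) - {Gh e})) \<and>
           (\<forall>e. phiE f = Gh e \<longrightarrow>
                 bij_betw phiE (out_arcs F w) {g \<in> out_arcs (double E) (phiV w). is_ghost g})"
proof -
  note Q = bspec[OF conjunct2[OF conjunct2[OF assms(1)[unfolded ext_rep_graph_def]]] assms(2)]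
  show "in_arcs F w = {} \<or> (\<exists>f. in_arcs F w = {f})" by (rule conjunct1[OF Q])
  show "in_arcs F w = {} \<longrightarrow> bij_betw phiE (out_arcs F w) (out_arcs (double E) (phiV w))"
    by (rule conjunct1[OF conjunct2[OF Q]])
  show "\<forall>f \<in> in_arcs F w.
           (\<forall>e. phiE f = Re e \<and> \<not> special E sp e \<longrightarrow>
                 bij_betw phiE (out_arcs F w) (out_arcs (double E) (phiV w))) \<and>
           (\<forall>e. phiE f = Re e \<and> special E sp e \<longrightarrow>
                 bij_betw phiE (out_arcs F w) (out_arcs (double E) (phiV w) - {Gh e})) \<and>
           (\<forall>e. phiE f = Gh e \<longrightarrow>
                 bij_betw phiE (out_arcs F w) {g \<in> out_arcs (double E) (phiV w). is_ghost g})"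
    by (rule conjunct2[OF conjunct2[OF Q]])
qed

definition prevE :: "('a,'b) pre_digraph \<Rightarrow> ('b \<Rightarrow> 'e dedge) \<Rightarrow> 'a \<Rightarrow> 'e dedge option" where
  "prevE F phiE w = (if in_arcs F w = {} then None else Some (phiE (the_elem (in_arcs F w))))"

lemma prevE_in:
  assumes "ext_rep_graph E sp F phiV phiE" "w \<in> verts F" "f \<in> in_arcs F w"
  shows "prevE F phiE w = Some (phiE f)" "in_arcs F w = {f}"
proof -
  have "in_arcs F w = {} \<or> (\<exists>f. in_arcs F w = {f})" by (rule ext_D(1)[OF assms(1,2)])
  then show "in_arcs F w = {f}" using assms(3) by (metis empty_iff singletonD)
  then show "prevE F phiE w = Some (phiE f)" unfolding prevE_def by simp
qed

lemma keyK:
  assumes R: "ext_rep_graph E sp F phiV phiE" and w: "w \<in> verts F"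
  shows "bij_betw phiE (out_arcs F w) {x \<in> out_arcs (double E) (phiV w). allowed E sp (prevE F phiE w) x}"
proof (cases "in_arcs F w = {}")
  case True
  have b: "bij_betw phiE (out_arcs F w) (out_arcs (double E) (phiV w))"
    using ext_D(2)[OF R w] True by (rule mp)
  have "{x \<in> out_arcs (double E) (phiV w). allowed E sp (prevE F phiE w) x} = out_arcs (double E) (phiV w)"
    using True by (auto simp: prevE_def out_arcs_def)
  then show ?thesis using b by simp
next
  case False
  then obtain f where f: "f \<in> in_arcs F w" by blast
  note P = prevE_in(1)[OF R w f]
  have C: "(\<forall>e. phiE f = Re e \<and> \<not> special E sp e \<longrightarrow>
                 bij_betw phiE (out_arcs F w) (out_arcs (double E) (phiV w))) \<and>
           (\<forall>e. phiE f = Re e \<and> special E sp e \<longrightarrow>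
                 bij_betw phiE (out_arcs F w) (out_arcs (double E) (phiV w) - {Gh e})) \<and>
           (\<forall>e. phiE f = Gh e \<longrightarrow>
                 bij_betw phiE (out_arcs F w) {g \<in> out_arcs (double E) (phiV w). is_ghost g})"
    using ext_D(3)[OF R w] f by (rule bspec)
  show ?thesis
  proof (cases "phiE f")
    case (Re e)
    show ?thesis
    proof (cases "special E sp e")
      case True
      have "{x \<in> out_arcs (double E) (phiV w). allowed E sp (prevE F phiE w) x} = out_arcs (double E) (phiV w) - {Gh e}"
        unfolding P Re using True by auto
      then show ?thesis using C Re True by simp
    next
      case False
      have "{x \<in> out_arcs (double E) (phiV w). allowed E sp (prevE F phiE w) x} = out_arcs (double E) (phiV w)"
        unfolding P Re using False by auto
      then show ?thesis using C Re False by simp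
    qed
  next
    case (Gh e)
    have "{x \<in> out_arcs (double E) (phiV w). allowed E sp (prevE F phiE w) x} = {g \<in> out_arcs (double E) (phiV w). is_ghost g}"
      unfolding P Gh by auto
    then show ?thesis using C Gh by simp
  qed
qed

lemma prevE_head:
  assumes R: "ext_rep_graph E sp F phiV phiE" and f: "f \<in> arcs F"
  shows "prevE F phiE (head F f) = Some (phiE f)"
proof -
  have wf: "wf_digraph F" using R by (rule ext_wf)
  have "head F f \<in> verts F" using wf f by (simp add: wf_digraph.head_in_verts)
  moreover have "f \<in> in_arcs F (head F f)" using f by (simp add: in_arcs_def)
  ultimately show ?thesis using prevE_in(1)[OF R] by blast
qed

lemma walk_image:
  assumes R: "ext_rep_graph E sp F phiV phiE"
  shows "pre_digraph.awalk F w p v \<Longrightarrow>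
    pre_digraph.awalk (double E) (phiV w) (map phiE p) (phiV v) \<and> okp E sp (prevE F phiE w) (map phiE p)"
proof (induction p arbitrary: w)
  have wf: "wf_digraph F" and H: "graph_hom F (double E) phiV phiE" using R by (rule ext_wf, rule ext_hom)
  case Nil then show ?case using H by (auto simp: awalk_Nil_iff' graph_hom_def)
next
  have wf: "wf_digraph F" and H: "graph_hom F (double E) phiV phiE" using R by (rule ext_wf, rule ext_hom)
  case (Cons f p)
  then have f: "f \<in> arcs F" "w = tail F f" and p: "pre_digraph.awalk F (head F f) p v"
    by (auto simp: wf_digraph.awalk_Cons_iff[OF wf])
  have wv: "w \<in> verts F" using f wf by (simp add: wf_digraph.tail_in_verts)
  have fo: "f \<in> out_arcs F w" using f by (simp add: out_arcs_def)
  have "phiE f \<in> {x \<in> out_arcs (double E) (phiV w). allowed E sp (prevE F phiE w) x}"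
    using keyK[OF R wv] fo by (auto simp: bij_betw_def)
  then have a: "phiE f \<in> arcs (double E)" "tail (double E) (phiE f) = phiV w" "allowed E sp (prevE F phiE w) (phiE f)"
    by (auto simp: out_arcs_def)
  have hd: "head (double E) (phiE f) = phiV (head F f)" using H f unfolding graph_hom_def by blast
  from Cons.IH[OF p] have "pre_digraph.awalk (double E) (phiV (head F f)) (map phiE p) (phiV v)"
     "okp E sp (Some (phiE f)) (map phiE p)" using prevE_head[OF R f(1)] by auto
  moreover have "phiV w \<in> verts (double E)" using H wv unfolding graph_hom_def by blast
  ultimately show ?case using a hd
    by (auto simp: pre_digraph.awalk_def pre_digraph.cas.simps)
qed

lemma walk_inj:
  assumes R: "ext_rep_graph E sp F phiV phiE"
  shows "pre_digraph.awalk F w p a \<Longrightarrow> pre_digraph.awalk F w q b \<Longrightarrow> map phiE p = map phiE q \<Longrightarrow> p = q"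
proof (induction p arbitrary: w q)
  case Nil then show ?case by simp
next
  have wf: "wf_digraph F" using R by (rule ext_wf)
  case (Cons f p)
  then obtain g q' where q: "q = g # q'" by (cases q) auto
  from Cons.prems q have f: "f \<in> arcs F" "w = tail F f" "pre_digraph.awalk F (head F f) p a"
    and g: "g \<in> arcs F" "w = tail F g" "pre_digraph.awalk F (head F g) q' b"
    and eq: "phiE f = phiE g" "map phiE p = map phiE q'"
    by (auto simp: wf_digraph.awalk_Cons_iff[OF wf])
  have wv: "w \<in> verts F" using f wf by (simp add: wf_digraph.tail_in_verts)
  have fo: "f \<in> out_arcs F w" using f by (simp add: out_arcs_def)
  have go: "g \<in> out_arcs F w" using g by (simp add: out_arcs_def)
  have "f = g" by (rule inj_onD[OF bij_betw_imp_inj_on[OF keyK[OF R wv]] eq(1) fo go])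
  then show ?case using Cons.IH[OF f(3)] g eq q by auto
qed

lemma walk_surj:
  assumes R: "ext_rep_graph E sp F phiV phiE" and wfE: "wf_digraph E"
  shows "pre_digraph.awalk (double E) (phiV w) xs v' \<Longrightarrow> okp E sp (prevE F phiE w) xs \<Longrightarrow> w \<in> verts F \<Longrightarrow>
     \<exists>p v. pre_digraph.awalk F w p v \<and> map phiE p = xs"
proof (induction xs arbitrary: w)
  case Nil then show ?case by (auto simp: awalk_Nil_iff')
next
  have wf: "wf_digraph F" and H: "graph_hom F (double E) phiV phiE" using R by (rule ext_wf, rule ext_hom)
  case (Cons x xs)
  have x: "x \<in> arcs (double E)" "tail (double E) x = phiV w"
    "pre_digraph.awalk (double E) (head (double E) x) xs v'"
    using Cons.prems(1) by (auto simp: wf_digraph.awalk_Cons_iff[OF wf_double[OF wfE]])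
  have al: "allowed E sp (prevE F phiE w) x" "okp E sp (Some x) xs" using Cons.prems(2) by auto
  have "x \<in> phiE ` out_arcs F w" using keyK[OF R Cons.prems(3)] x al
    unfolding bij_betw_def by (auto simp: out_arcs_def)
  then obtain f where f: "f \<in> arcs F" "tail F f = w" "phiE f = x" by (auto simp: out_arcs_def)
  have hv: "head F f \<in> verts F" using wf f by (simp add: wf_digraph.head_in_verts)
  have hd: "head (double E) x = phiV (head F f)" using H f unfolding graph_hom_def by blast
  obtain p v where "pre_digraph.awalk F (head F f) p v" "map phiE p = xs"
    using Cons.IH[of "head F f"] x(3) hd al prevE_head[OF R f(1)] f hv by auto
  then show ?case using f by (intro exI[of _ "f # p"] exI[of _ v]) (auto simp: wf_digraph.awalk_Cons_iff[OF wf])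
qed

lemma main_bij:
  assumes wfE: "wf_digraph E" and R: "ext_rep_graph E sp F phiV phiE" and w: "w \<in> verts F"
  shows "bij_betw (path_map phiV phiE) (paths_from F w)
     {(phiV w, xs) | xs. (\<exists>v'. pre_digraph.awalk (double E) (phiV w) xs v') \<and> okp E sp (prevE F phiE w) xs}"
  unfolding bij_betw_def
proof
  show "inj_on (path_map phiV phiE) (paths_from F w)"
    unfolding inj_on_def paths_from_def path_map_def using walk_inj[OF R] by auto
  show "path_map phiV phiE ` paths_from F w =
    {(phiV w, xs) | xs. (\<exists>v'. pre_digraph.awalk (double E) (phiV w) xs v') \<and> okp E sp (prevE F phiE w) xs}"
  proof (intro set_eqI iffI)
    fix y assume "y \<in> path_map phiV phiE ` paths_from F w"
    then show "y \<in> {(phiV w, xs) | xs. (\<exists>v'. pre_digraph.awalk (double E) (phiV w) xs v') \<and> okp E sp (prevE F phiE w) xs}"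
      unfolding paths_from_def path_map_def using walk_image[OF R] by fastforce
  next
    fix y assume "y \<in> {(phiV w, xs) | xs. (\<exists>v'. pre_digraph.awalk (double E) (phiV w) xs v') \<and> okp E sp (prevE F phiE w) xs}"
    then obtain xs v' where y: "y = (phiV w, xs)" "pre_digraph.awalk (double E) (phiV w) xs v'"
      "okp E sp (prevE F phiE w) xs" by blast
    then obtain p v where "pre_digraph.awalk F w p v" "map phiE p = xs" using walk_surj[OF R wfE] w by blast
    then show "y \<in> path_map phiV phiE ` paths_from F w"
      unfolding paths_from_def path_map_def using y by (auto intro!: image_eqI[of _ _ "(w, p)"])
  qed
qed


theorem lemma5p1:
  fixes E :: "('v,'e) pre_digraph" and sp :: "'v \<Rightarrow> 'e"
    and F :: "('a,'b) pre_digraph" and phiV :: "'a \<Rightarrow> 'v" and phiE :: "'b \<Rightarrow> 'e dedge"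
  assumes "wf_digraph E" and "row_finite E" and "special_choice E sp"
    and "ext_rep_graph E sp F phiV phiE"
    and "w \<in> verts F" and "phiV w = v"
  shows "((in_arcs F w = {} \<or> (\<exists>f \<in> in_arcs F w. \<exists>e. phiE f = Re e \<and> \<not> special E sp e)) \<longrightarrow>
           bij_betw (path_map phiV phiE) (paths_from F w) (basis_paths_from E sp v)) \<and>
         (\<forall>f \<in> in_arcs F w. \<forall>e. phiE f = Re e \<and> special E sp e \<longrightarrow>
           bij_betw (path_map phiV phiE) (paths_from F w)
             {x \<in> basis_paths_from E sp v. snd x = [] \<or> hd (snd x) \<noteq> Gh e}) \<and>
         (\<forall>f \<in> in_arcs F w. \<forall>e. phiE f = Gh e \<longrightarrow>
           bij_betw (path_map phiV phiE) (paths_from F w)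
             {x \<in> basis_paths_from E sp v. snd x = [] \<or> is_ghost (hd (snd x))}) \<and>
         (\<forall>u \<in> verts F. \<forall>x \<in> paths_from F u. path_map phiV phiE x \<in> basis_paths E sp)"
proof -
  note wfE = assms(1) and R = assms(4) and w = assms(5) and v = assms(6)
  define T where "T = {(v, xs) | xs. (\<exists>v'. pre_digraph.awalk (double E) v xs v') \<and> okp E sp (prevE F phiE w) xs}"
  have B: "bij_betw (path_map phiV phiE) (paths_from F w) T"
    using main_bij[OF wfE R w] v unfolding T_def by simp
  have BP: "basis_paths_from E sp v = {(v, xs) | xs. (\<exists>v'. pre_digraph.awalk (double E) v xs v') \<and> okp E sp None xs}"
    unfolding basis_paths_from_def basis_char[OF wfE] by auto
  have T': "T = {x \<in> basis_paths_from E sp v. snd x = [] \<or> allowed E sp (prevE F phiE w) (hd (snd x))}"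
    unfolding T_def BP by (subst okp_pr) auto
  have c1: "bij_betw (path_map phiV phiE) (paths_from F w) (basis_paths_from E sp v)"
    if h: "in_arcs F w = {} \<or> (\<exists>f \<in> in_arcs F w. \<exists>e. phiE f = Re e \<and> \<not> special E sp e)"
  proof -
    have "\<forall>x. allowed E sp (prevE F phiE w) x"
      using h
    proof
      assume "in_arcs F w = {}" then show ?thesis unfolding prevE_def by simp
    next
      assume "\<exists>f \<in> in_arcs F w. \<exists>e. phiE f = Re e \<and> \<not> special E sp e"
      then obtain f e where "f \<in> in_arcs F w" "phiE f = Re e" "\<not> special E sp e" by blast
      then show ?thesis using prevE_in(1)[OF R w] by auto
    qed
    then have "T = basis_paths_from E sp v" unfolding T' by auto
    then show ?thesis using B by simp
  qed
  have c2: "bij_betw (path_map phiV phiE) (paths_from F w)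
             {x \<in> basis_paths_from E sp v. snd x = [] \<or> hd (snd x) \<noteq> Gh e}"
    if "f \<in> in_arcs F w" "phiE f = Re e" "special E sp e" for f e
  proof -
    have "T = {x \<in> basis_paths_from E sp v. snd x = [] \<or> hd (snd x) \<noteq> Gh e}"
      unfolding T' using prevE_in(1)[OF R w that(1)] that by auto
    then show ?thesis using B by simp
  qed
  have c3: "bij_betw (path_map phiV phiE) (paths_from F w)
             {x \<in> basis_paths_from E sp v. snd x = [] \<or> is_ghost (hd (snd x))}"
    if "f \<in> in_arcs F w" "phiE f = Gh e" for f e
  proof -
    have "T = {x \<in> basis_paths_from E sp v. snd x = [] \<or> is_ghost (hd (snd x))}"
      unfolding T' using prevE_in(1)[OF R w that(1)] that by auto
    then show ?thesis using B by simp
  qed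
  have c4: "path_map phiV phiE x \<in> basis_paths E sp" if xin: "x \<in> paths_from F u" for u x
  proof -
    obtain p v' where x: "x = (u, p)" "pre_digraph.awalk F u p v'" using xin unfolding paths_from_def by blast
    from walk_image[OF R x(2)] have "pre_digraph.awalk (double E) (phiV u) (map phiE p) (phiV v')"
      "okp E sp None (map phiE p)" using okp_pr by blast+
    then show ?thesis unfolding basis_char[OF wfE] x path_map_def by auto
  qed
  show ?thesis using c1 c2 c3 c4 by blast
qed

end
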